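(* Let $(G,\cdot,D,\star)$ be an invariant probabilistic metric group with identity $e$, where $\star$ is sup-continuous. Then $Lip^1_\star(G,\Delta^+)$ is closed under $\odot$, and $(Lip^1_\star(G,\Delta^+),\odot)$ is a monoid with identity element $\delta_e$. Moreover, the map $\delta:(G,\cdot)\to(Lip^1_\star(G,\Delta^+),\odot)$, $a\mapsto\delta_a$, is an injective homomorphism.
   Context: A distribution function is a nondecreasing, left-continuous function $F:[-\infty,+\infty]\to[0,1]$ with $F(-\infty)=0$, $F(+\infty)=1$; $\Delta^+$ is the set of distribution functions with $F(0)=0$, ordered pointwise; $(\Delta^+,\le)$ is a complete lattice with maximum $\mathcal H_0$ ($\mathcal H_0(t)=0$ for $t\le0$, $1$ for $t>0$). A triangle function is a binary operation $\star$ on $\Delta^+$ that is commutative, associative, nondecreasing in each argument, with $F\star\mathcal H_0=F$; it is sup-continuous if $\sup_{i\in I}(F_i\star L)=(\sup_{i\in I}F_i)\star L$ for every nonempty family $(F_i)$ and every $L$. A probabilistic metric space $(G,D,\star)$ consists of a set $G$, a triangle function $\star$ and $D:G\times G\to\Delta^+$ with (i) $D(p,q)=\mathcal H_0$ iff $p=q$; (ii) $D(p,q)=D(q,p)$; (iii) $D(p,q)\star D(q,r)\le D(p,r)$. If $(G,\cdot)$ is a group and $D(pr,qr)=D(rp,rq)=D(p,q)$ for all $p,q,r$, it is an invariant probabilistic metric group. $Lip^1_\star(G,\Delta^+)$ is the set of maps $f:G\to\Delta^+$ with $D(x,y)\star f(y)\le f(x)$ for all $x,y$. $\delta_a(y)=D(y,a)$.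 For maps $f,g:G\to\Delta^+$, $(f\odot g)(x)=\sup_{y,z\in G,\ yz=x}f(y)\star g(z)$. *)

theory Defs
  imports "HOL-Analysis.Analysis" "HOL-Algebra.Group" "HOL-Library.FuncSet"
begin

type_synonym distf = "ereal \<Rightarrow> real"

definition distribution_function :: "distf \<Rightarrow> bool" where
  "distribution_function F \<longleftrightarrow>
     mono F \<and> (\<forall>t. 0 \<le> F t \<and> F t \<le> 1) \<and>
     (\<forall>x. (F \<longlongrightarrow> F x) (at_left x)) \<and>
     F (-\<infinity>) = 0 \<and> F \<infinity> = 1"

definition Delta_plus :: "distf set" where
  "Delta_plus = {F. distribution_function F \<and> F 0 = 0}"

definition H0 :: distf where
  "H0 = (\<lambda>t. if t \<le> 0 then 0 else 1)"

definition dsup :: "distf set \<Rightarrow> distf" where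
  "dsup A = (\<lambda>t. SUP F\<in>A. F t)"

definition triangle_function :: "(distf \<Rightarrow> distf \<Rightarrow> distf) \<Rightarrow> bool" where
  "triangle_function T \<longleftrightarrow>
     (\<forall>F\<in>Delta_plus. \<forall>G\<in>Delta_plus. T F G \<in> Delta_plus) \<and>
     (\<forall>F\<in>Delta_plus. \<forall>G\<in>Delta_plus. T F G = T G F) \<and>
     (\<forall>F\<in>Delta_plus. \<forall>G\<in>Delta_plus. \<forall>H\<in>Delta_plus. T (T F G) H = T F (T G H)) \<and>
     (\<forall>F\<in>Delta_plus. \<forall>G\<in>Delta_plus. \<forall>H\<in>Delta_plus. F \<le> G \<longrightarrow> T F H \<le> T G H) \<and>
     (\<forall>F\<in>Delta_plus. \<forall>G\<in>Delta_plus. \<forall>H\<in>Delta_plus. F \<le> G \<longrightarrow> T H F \<le> T H G) \<and>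
     (\<forall>F\<in>Delta_plus. T F H0 = F)"

definition tf_sup_continuous :: "(distf \<Rightarrow> distf \<Rightarrow> distf) \<Rightarrow> bool" where
  "tf_sup_continuous T \<longleftrightarrow>
     (\<forall>A L. A \<noteq> {} \<longrightarrow> A \<subseteq> Delta_plus \<longrightarrow> L \<in> Delta_plus \<longrightarrow>
        dsup ((\<lambda>F. T F L) ` A) = T (dsup A) L)"

definition pm_space :: "'a set \<Rightarrow> ('a \<Rightarrow> 'a \<Rightarrow> distf) \<Rightarrow> (distf \<Rightarrow> distf \<Rightarrow> distf) \<Rightarrow> bool" where
  "pm_space S D T \<longleftrightarrow>
     triangle_function T \<and>
     (\<forall>p\<in>S. \<forall>q\<in>S. D p q \<in> Delta_plus) \<and>
     (\<forall>p\<in>S. \<forall>q\<in>S. D p q = H0 \<longleftrightarrow> p = q) \<and>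
     (\<forall>p\<in>S. \<forall>q\<in>S. D p q = D q p) \<and>
     (\<forall>p\<in>S. \<forall>q\<in>S. \<forall>r\<in>S. T (D p q) (D q r) \<le> D p r)"

definition invariant_pm_group ::
  "('a, 'b) monoid_scheme \<Rightarrow> ('a \<Rightarrow> 'a \<Rightarrow> distf) \<Rightarrow> (distf \<Rightarrow> distf \<Rightarrow> distf) \<Rightarrow> bool" where
  "invariant_pm_group G D T \<longleftrightarrow>
     group G \<and> pm_space (carrier G) D T \<and>
     (\<forall>p\<in>carrier G. \<forall>q\<in>carrier G. \<forall>r\<in>carrier G.
        D (p \<otimes>\<^bsub>G\<^esub> r) (q \<otimes>\<^bsub>G\<^esub> r) = D p q \<and> D (r \<otimes>\<^bsub>G\<^esub> p) (r \<otimes>\<^bsub>G\<^esub> q) = D p q)"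

text \<open>Maps G -> Delta_plus are represented extensionally (undefined outside the carrier).\<close>
definition Lip1 ::
  "('a, 'b) monoid_scheme \<Rightarrow> ('a \<Rightarrow> 'a \<Rightarrow> distf) \<Rightarrow> (distf \<Rightarrow> distf \<Rightarrow> distf) \<Rightarrow> ('a \<Rightarrow> distf) set" where
  "Lip1 G D T = {f \<in> carrier G \<rightarrow>\<^sub>E Delta_plus.
      \<forall>x\<in>carrier G. \<forall>y\<in>carrier G. T (D x y) (f y) \<le> f x}"

definition pdelta :: "('a, 'b) monoid_scheme \<Rightarrow> ('a \<Rightarrow> 'a \<Rightarrow> distf) \<Rightarrow> 'a \<Rightarrow> ('a \<Rightarrow> distf)" where
  "pdelta G D a = (\<lambda>y\<in>carrier G. D y a)"

definition pconv ::
  "('a, 'b) monoid_scheme \<Rightarrow> (distf \<Rightarrow> distf \<Rightarrow> distf) \<Rightarrow> ('a \<Rightarrow> distf) \<Rightarrow> ('a \<Rightarrow> distf) \<Rightarrow> ('a \<Rightarrow> distf)" where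
  "pconv G T f g = (\<lambda>x\<in>carrier G.
      dsup {T (f y) (g z) | y z. y \<in> carrier G \<and> z \<in> carrier G \<and> y \<otimes>\<^bsub>G\<^esub> z = x})"

definition Lip_monoid ::
  "('a, 'b) monoid_scheme \<Rightarrow> ('a \<Rightarrow> 'a \<Rightarrow> distf) \<Rightarrow> (distf \<Rightarrow> distf \<Rightarrow> distf) \<Rightarrow> ('a \<Rightarrow> distf) monoid" where
  "Lip_monoid G D T = \<lparr>carrier = Lip1 G D T, monoid.mult = pconv G T, one = pdelta G D \<one>\<^bsub>G\<^esub>\<rparr>"

end

theory Submission imports Defs begin

lemma DP_bounds: "F \<in> Delta_plus \<Longrightarrow> 0 \<le> F t \<and> F t \<le> 1"
  by (auto simp: Delta_plus_def distribution_function_def)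

lemma bdd_DP: "B \<subseteq> Delta_plus \<Longrightarrow> bdd_above ((\<lambda>F. F t) ` B)"
  by (rule bdd_aboveI[of _ 1]) (auto dest: DP_bounds)

lemma dsup_upper: "B \<subseteq> Delta_plus \<Longrightarrow> F \<in> B \<Longrightarrow> F \<le> dsup B"
  unfolding le_fun_def dsup_def by (auto intro: cSUP_upper bdd_DP)

lemma dsup_least: "B \<noteq> {} \<Longrightarrow> (\<And>F. F \<in> B \<Longrightarrow> F \<le> H) \<Longrightarrow> dsup B \<le> H"
  unfolding le_fun_def dsup_def by (auto intro: cSUP_least)

lemma dsup_in:
  assumes ne: "B \<noteq> {}" and sub: "B \<subseteq> Delta_plus"
  shows "dsup B \<in> Delta_plus"
proof -
  let ?S = "dsup B"
  have df: "\<And>F. F \<in> B \<Longrightarrow> distribution_function F \<and> F 0 = 0" using sub by (auto simp: Delta_plus_def)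
  have mono: "mono ?S"
  proof (rule monoI)
    fix s t :: ereal assume "s \<le> t"
    then have "\<And>F. F \<in> B \<Longrightarrow> F s \<le> F t" using df by (auto simp: distribution_function_def mono_def)
    then show "?S s \<le> ?S t" unfolding dsup_def
      by (intro cSUP_mono[OF ne bdd_DP[OF sub]]) auto
  qed
  have const: "?S t = c" if "\<And>F. F \<in> B \<Longrightarrow> F t = c" for t c
  proof -
    have "dsup B t = (SUP F\<in>B. c)" unfolding dsup_def using that by (intro SUP_cong) auto
    then show ?thesis using ne by simp
  qed
  have b: "0 \<le> ?S t \<and> ?S t \<le> 1" for t
  proof
    obtain F where F: "F \<in> B" using ne by auto
    have "0 \<le> F t" using F sub DP_bounds by blast
    also have "F t \<le> ?S t" using dsup_upper[OF sub F] by (simp add: le_fun_def)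
    finally show "0 \<le> ?S t" .
    show "?S t \<le> 1" unfolding dsup_def using ne sub DP_bounds by (intro cSUP_least) auto
  qed
  have lc: "(?S \<longlongrightarrow> ?S x) (at_left x)" for x
  proof (rule order_tendstoI)
    fix a assume "a < ?S x"
    then obtain F where F: "F \<in> B" "a < F x" unfolding dsup_def
      using less_cSUP_iff[OF ne bdd_DP[OF sub]] by blast
    have "(F \<longlongrightarrow> F x) (at_left x)" using df[OF F(1)] by (auto simp: distribution_function_def)
    then have "eventually (\<lambda>t. a < F t) (at_left x)" using F(2) by (rule order_tendstoD)
    then show "eventually (\<lambda>t. a < ?S t) (at_left x)"
    proof (rule eventually_mono)
      fix t assume "a < F t" then show "a < ?S t" using dsup_upper[OF sub F(1)] by (auto simp: le_fun_def intro: less_le_trans)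
    qed
  next
    fix a assume a: "?S x < a"
    have "eventually (\<lambda>t. t < x) (at_left x)"
      by (simp add: eventually_at_filter)
    then show "eventually (\<lambda>t. ?S t < a) (at_left x)"
    proof (rule eventually_mono)
      fix t assume "t < x" then show "?S t < a" using mono a by (meson le_less_trans less_imp_le monoD)
    qed
  qed
  have "?S (-\<infinity>) = 0" by (rule const) (use df in \<open>auto simp: distribution_function_def\<close>)
  moreover have "?S \<infinity> = 1" by (rule const) (use df in \<open>auto simp: distribution_function_def\<close>)
  moreover have "?S 0 = 0" by (rule const) (use df in auto)
  ultimately show ?thesis using mono b lc by (auto simp: Delta_plus_def distribution_function_def)
qed


locale ipg = group G for G :: "('a,'b) monoid_scheme" (structure) +
  fixes D :: "'a \<Rightarrow> 'a \<Rightarrow> distf" and T :: "distf \<Rightarrow> distf \<Rightarrow> distf"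
  assumes ipg: "invariant_pm_group G D T" and sc: "tf_sup_continuous T"
begin

lemma tf: "triangle_function T" using ipg by (simp add: invariant_pm_group_def pm_space_def)

lemma T_in: "F \<in> Delta_plus \<Longrightarrow> H \<in> Delta_plus \<Longrightarrow> T F H \<in> Delta_plus"
  using tf by (simp add: triangle_function_def)
lemma T_comm: "F \<in> Delta_plus \<Longrightarrow> H \<in> Delta_plus \<Longrightarrow> T F H = T H F"
  using tf by (simp add: triangle_function_def)
lemma T_assoc: "F \<in> Delta_plus \<Longrightarrow> H \<in> Delta_plus \<Longrightarrow> K \<in> Delta_plus \<Longrightarrow> T (T F H) K = T F (T H K)"
  using conjunct1[OF conjunct2[OF conjunct2[OF tf[unfolded triangle_function_def]]], rule_format] by blast
lemma T_mono1: "F \<in> Delta_plus \<Longrightarrow> H \<in> Delta_plus \<Longrightarrow> K \<in> Delta_plus \<Longrightarrow> F \<le> H \<Longrightarrow> T F K \<le> T H K"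
  using tf by (simp add: triangle_function_def)
lemma T_mono2: "F \<in> Delta_plus \<Longrightarrow> H \<in> Delta_plus \<Longrightarrow> K \<in> Delta_plus \<Longrightarrow> F \<le> H \<Longrightarrow> T K F \<le> T K H"
  using tf by (simp add: triangle_function_def)
lemma T_H0: "F \<in> Delta_plus \<Longrightarrow> T F H0 = F"
  using tf by (simp add: triangle_function_def)

lemma pm: "pm_space (carrier G) D T" using ipg by (simp add: invariant_pm_group_def)
lemma D_in: "p \<in> carrier G \<Longrightarrow> q \<in> carrier G \<Longrightarrow> D p q \<in> Delta_plus"
  using pm by (simp add: pm_space_def)
lemma D_H0: "p \<in> carrier G \<Longrightarrow> q \<in> carrier G \<Longrightarrow> D p q = H0 \<longleftrightarrow> p = q"
  using pm by (simp add: pm_space_def)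
lemma D_tri: "p \<in> carrier G \<Longrightarrow> q \<in> carrier G \<Longrightarrow> r \<in> carrier G \<Longrightarrow> T (D p q) (D q r) \<le> D p r"
  using pm by (simp add: pm_space_def)
lemma invr: "p \<in> carrier G \<Longrightarrow> q \<in> carrier G \<Longrightarrow> r \<in> carrier G \<Longrightarrow> D (p \<otimes> r) (q \<otimes> r) = D p q"
  using ipg by (simp add: invariant_pm_group_def)
lemma invl: "p \<in> carrier G \<Longrightarrow> q \<in> carrier G \<Longrightarrow> r \<in> carrier G \<Longrightarrow> D (r \<otimes> p) (r \<otimes> q) = D p q"
  using ipg by (simp add: invariant_pm_group_def)

lemma H0_in: "H0 \<in> Delta_plus" using D_in[of "\<one>\<^bsub>G\<^esub>" "\<one>\<^bsub>G\<^esub>"] D_H0[of "\<one>\<^bsub>G\<^esub>" "\<one>\<^bsub>G\<^esub>"] by simp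
lemma T_H0l: "F \<in> Delta_plus \<Longrightarrow> T H0 F = F" using T_H0 T_comm H0_in by metis

lemma T_dsup_le1:
  assumes "A \<noteq> {}" "A \<subseteq> Delta_plus" "L \<in> Delta_plus" "\<And>F. F \<in> A \<Longrightarrow> T F L \<le> H"
  shows "T (dsup A) L \<le> H"
proof -
  have "T (dsup A) L = dsup ((\<lambda>F. T F L) ` A)" using sc assms by (simp add: tf_sup_continuous_def)
  also have "\<dots> \<le> H" using assms by (intro dsup_least) auto
  finally show ?thesis .
qed

lemma T_dsup_le2:
  assumes "A \<noteq> {}" "A \<subseteq> Delta_plus" "L \<in> Delta_plus" "\<And>F. F \<in> A \<Longrightarrow> T L F \<le> H"
  shows "T L (dsup A) \<le> H"
proof -
  have "T L (dsup A) = T (dsup A) L" using T_comm dsup_in assms by metis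
  also have "\<dots> \<le> H" using assms T_comm by (intro T_dsup_le1) (auto, metis subsetD)
  finally show ?thesis .
qed

definition "DPmap f \<longleftrightarrow> (\<forall>y\<in>carrier G. f y \<in> Delta_plus)"

definition "CS f g x = {T (f y) (g z) | y z. y \<in> carrier G \<and> z \<in> carrier G \<and> y \<otimes> z = x}"

lemma CS_ne: "x \<in> carrier G \<Longrightarrow> CS f g x \<noteq> {}"
  unfolding CS_def using r_one[of x] one_closed by blast

lemma CS_sub: "DPmap f \<Longrightarrow> DPmap g \<Longrightarrow> CS f g x \<subseteq> Delta_plus"
  unfolding CS_def DPmap_def by (auto intro: T_in)

lemma pconv_val: "x \<in> carrier G \<Longrightarrow> pconv G T f g x = dsup (CS f g x)"
  by (simp add: pconv_def CS_def)

lemma pconv_DP: "DPmap f \<Longrightarrow> DPmap g \<Longrightarrow> DPmap (pconv G T f g)"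
  unfolding DPmap_def using pconv_val dsup_in CS_ne CS_sub by (metis DPmap_def)

lemma pconv_upper:
  assumes "DPmap f" "DPmap g" "y \<in> carrier G" "z \<in> carrier G"
  shows "T (f y) (g z) \<le> pconv G T f g (y \<otimes> z)"
proof -
  have "T (f y) (g z) \<in> CS f g (y \<otimes> z)" using assms unfolding CS_def by blast
  then show ?thesis using assms pconv_val[of "y \<otimes> z" f g] dsup_upper CS_sub by simp
qed

lemma pconv_least:
  assumes "x \<in> carrier G" "\<And>y z. y \<in> carrier G \<Longrightarrow> z \<in> carrier G \<Longrightarrow> y \<otimes> z = x \<Longrightarrow> T (f y) (g z) \<le> H"
  shows "pconv G T f g x \<le> H"
proof -
  have "dsup (CS f g x) \<le> H"
  proof (rule dsup_least[OF CS_ne[OF assms(1)]])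
    fix F assume "F \<in> CS f g x" then show "F \<le> H" unfolding CS_def using assms(2) by blast
  qed
  then show ?thesis using pconv_val assms(1) by simp
qed

lemma pconv_T_le1:
  assumes "DPmap f" "DPmap g" "x \<in> carrier G" "L \<in> Delta_plus"
    "\<And>y z. y \<in> carrier G \<Longrightarrow> z \<in> carrier G \<Longrightarrow> y \<otimes> z = x \<Longrightarrow> T (T (f y) (g z)) L \<le> H"
  shows "T (pconv G T f g x) L \<le> H"
proof -
  have "T (dsup (CS f g x)) L \<le> H"
  proof (rule T_dsup_le1[OF CS_ne[OF assms(3)] CS_sub[OF assms(1,2)] assms(4)])
    fix F assume "F \<in> CS f g x" then show "T F L \<le> H" unfolding CS_def using assms(5) by blast
  qed
  then show ?thesis using pconv_val assms(3) by simp
qed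

lemma pconv_T_le2:
  assumes "DPmap f" "DPmap g" "x \<in> carrier G" "L \<in> Delta_plus"
    "\<And>y z. y \<in> carrier G \<Longrightarrow> z \<in> carrier G \<Longrightarrow> y \<otimes> z = x \<Longrightarrow> T L (T (f y) (g z)) \<le> H"
  shows "T L (pconv G T f g x) \<le> H"
proof -
  have "T L (dsup (CS f g x)) \<le> H"
  proof (rule T_dsup_le2[OF CS_ne[OF assms(3)] CS_sub[OF assms(1,2)] assms(4)])
    fix F assume "F \<in> CS f g x" then show "T L F \<le> H" unfolding CS_def using assms(5) by blast
  qed
  then show ?thesis using pconv_val assms(3) by simp
qed

lemma Lip_DP: "f \<in> Lip1 G D T \<Longrightarrow> DPmap f"
  by (auto simp: Lip1_def DPmap_def)
lemma Lip_ineq: "f \<in> Lip1 G D T \<Longrightarrow> x \<in> carrier G \<Longrightarrow> y \<in> carrier G \<Longrightarrow> T (D x y) (f y) \<le> f x"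
  by (auto simp: Lip1_def)
lemma Lip_ext: "f \<in> Lip1 G D T \<Longrightarrow> f \<in> extensional (carrier G)"
  by (auto simp: Lip1_def PiE_iff)

lemma pconv_Lip:
  assumes f: "f \<in> Lip1 G D T" and g: "g \<in> Lip1 G D T"
  shows "pconv G T f g \<in> Lip1 G D T"
proof -
  have fD: "DPmap f" and gD: "DPmap g" using f g Lip_DP by auto
  have hD: "DPmap (pconv G T f g)" using pconv_DP fD gD by blast
  have "T (D x y) (pconv G T f g y) \<le> pconv G T f g x" if x: "x \<in> carrier G" and y: "y \<in> carrier G" for x y
  proof (rule pconv_T_le2[OF fD gD y D_in[OF x y]])
    fix a b assume a: "a \<in> carrier G" and b: "b \<in> carrier G" and ab: "a \<otimes> b = y"
    let ?a' = "x \<otimes> inv b"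
    have a': "?a' \<in> carrier G" using x b by simp
    have xa: "?a' \<otimes> b = x" using x b by (simp add: m_assoc)
    have Dxy: "D x y = D ?a' a" using invr[OF a' a b] xa ab by simp
    have fa: "f a \<in> Delta_plus" "g b \<in> Delta_plus" "f ?a' \<in> Delta_plus" using fD gD a b a' by (auto simp: DPmap_def)
    have "T (D x y) (T (f a) (g b)) = T (T (D ?a' a) (f a)) (g b)"
      using T_assoc D_in[OF a' a] fa Dxy by simp
    also have "\<dots> \<le> T (f ?a') (g b)"
      using T_mono1 Lip_ineq[OF f a' a] fa T_in D_in[OF a' a] by blast
    also have "\<dots> \<le> pconv G T f g x" using pconv_upper[OF fD gD a' b] xa by simp
    finally show "T (D x y) (T (f a) (g b)) \<le> pconv G T f g x" .
  qed
  then show ?thesis using hD unfolding Lip1_def DPmap_def by (auto simp: pconv_def)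
qed


lemma pconv_ext: "pconv G T f g \<in> extensional (carrier G)" by (simp add: pconv_def)

lemma pconv_assoc:
  assumes f: "DPmap f" and g: "DPmap g" and h: "DPmap h"
  shows "pconv G T (pconv G T f g) h = pconv G T f (pconv G T g h)"
proof (rule extensionalityI[OF pconv_ext pconv_ext])
  fix x assume x: "x \<in> carrier G"
  have fg: "DPmap (pconv G T f g)" and gh: "DPmap (pconv G T g h)" using pconv_DP f g h by auto
  show "pconv G T (pconv G T f g) h x = pconv G T f (pconv G T g h) x"
  proof (rule antisym)
    show "pconv G T (pconv G T f g) h x \<le> pconv G T f (pconv G T g h) x"
    proof (rule pconv_least[OF x])
      fix y z assume y: "y \<in> carrier G" and z: "z \<in> carrier G" and yz: "y \<otimes> z = x"
      show "T (pconv G T f g y) (h z) \<le> pconv G T f (pconv G T g h) x"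
      proof (rule pconv_T_le1[OF f g y])
        show "h z \<in> Delta_plus" using h z by (simp add: DPmap_def)
        fix a b assume a: "a \<in> carrier G" and b: "b \<in> carrier G" and ab: "a \<otimes> b = y"
        have in1: "f a \<in> Delta_plus" "g b \<in> Delta_plus" "h z \<in> Delta_plus" "pconv G T g h (b \<otimes> z) \<in> Delta_plus"
          using f g h gh a b z by (auto simp: DPmap_def)
        have "T (T (f a) (g b)) (h z) = T (f a) (T (g b) (h z))" using T_assoc in1 by simp
        also have "\<dots> \<le> T (f a) (pconv G T g h (b \<otimes> z))"
          using T_mono2 in1 T_in pconv_upper[OF g h b z] by blast
        also have "\<dots> \<le> pconv G T f (pconv G T g h) (a \<otimes> (b \<otimes> z))" using pconv_upper[OF f gh a] b z by simp
        also have "a \<otimes> (b \<otimes> z) = x" using a b z ab yz by (metis m_assoc)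
        finally show "T (T (f a) (g b)) (h z) \<le> pconv G T f (pconv G T g h) x" .
      qed
    qed
  next
    show "pconv G T f (pconv G T g h) x \<le> pconv G T (pconv G T f g) h x"
    proof (rule pconv_least[OF x])
      fix a w assume a: "a \<in> carrier G" and w: "w \<in> carrier G" and aw: "a \<otimes> w = x"
      show "T (f a) (pconv G T g h w) \<le> pconv G T (pconv G T f g) h x"
      proof (rule pconv_T_le2[OF g h w])
        show "f a \<in> Delta_plus" using f a by (simp add: DPmap_def)
        fix b c assume b: "b \<in> carrier G" and c: "c \<in> carrier G" and bc: "b \<otimes> c = w"
        have in1: "f a \<in> Delta_plus" "g b \<in> Delta_plus" "h c \<in> Delta_plus" "pconv G T f g (a \<otimes> b) \<in> Delta_plus"
          using f g h fg a b c by (auto simp: DPmap_def)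
        have "T (f a) (T (g b) (h c)) = T (T (f a) (g b)) (h c)" using T_assoc in1 by simp
        also have "\<dots> \<le> T (pconv G T f g (a \<otimes> b)) (h c)"
          using T_mono1 in1 T_in pconv_upper[OF f g a b] by blast
        also have "\<dots> \<le> pconv G T (pconv G T f g) h ((a \<otimes> b) \<otimes> c)" using pconv_upper[OF fg h _ c] a b by simp
        also have "(a \<otimes> b) \<otimes> c = x" using a b c bc aw by (metis m_assoc)
        finally show "T (f a) (T (g b) (h c)) \<le> pconv G T (pconv G T f g) h x" .
      qed
    qed
  qed
qed

lemma pdelta_val: "y \<in> carrier G \<Longrightarrow> pdelta G D a y = D y a" by (simp add: pdelta_def)
lemma pdelta_ext: "pdelta G D a \<in> extensional (carrier G)" by (simp add: pdelta_def)

lemma pdelta_Lip: "a \<in> carrier G \<Longrightarrow> pdelta G D a \<in> Lip1 G D T"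
  unfolding Lip1_def by (auto simp: pdelta_def D_in D_tri)

lemma pdelta_DP: "a \<in> carrier G \<Longrightarrow> DPmap (pdelta G D a)"
  using pdelta_Lip Lip_DP by blast

lemma l_one_Lip:
  assumes f: "f \<in> Lip1 G D T"
  shows "pconv G T (pdelta G D \<one>) f = f"
proof (rule extensionalityI[OF pconv_ext Lip_ext[OF f]])
  have fD: "DPmap f" using f Lip_DP by blast
  have eD: "DPmap (pdelta G D \<one>)" using pdelta_DP by simp
  fix x assume x: "x \<in> carrier G"
  have fx: "f x \<in> Delta_plus" using fD x by (simp add: DPmap_def)
  show "pconv G T (pdelta G D \<one>) f x = f x"
  proof (rule antisym)
    show "pconv G T (pdelta G D \<one>) f x \<le> f x"
    proof (rule pconv_least[OF x])
      fix y z assume y: "y \<in> carrier G" and z: "z \<in> carrier G" and yz: "y \<otimes> z = x"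
      have "D y \<one> = D x z" using invr[OF y one_closed z] yz z by simp
      then show "T (pdelta G D \<one> y) (f z) \<le> f x" using Lip_ineq[OF f x z] y by (simp add: pdelta_val)
    qed
  next
    have "f x = T (pdelta G D \<one> \<one>) (f x)" using D_H0[of \<one> \<one>] T_H0l fx by (simp add: pdelta_val)
    also have "\<dots> \<le> pconv G T (pdelta G D \<one>) f (\<one> \<otimes> x)" using pconv_upper[OF eD fD one_closed x] .
    finally show "f x \<le> pconv G T (pdelta G D \<one>) f x" using x by simp
  qed
qed

lemma r_one_Lip:
  assumes f: "f \<in> Lip1 G D T"
  shows "pconv G T f (pdelta G D \<one>) = f"
proof (rule extensionalityI[OF pconv_ext Lip_ext[OF f]])
  have fD: "DPmap f" using f Lip_DP by blast
  have eD: "DPmap (pdelta G D \<one>)" using pdelta_DP by simp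
  fix x assume x: "x \<in> carrier G"
  have fx: "f x \<in> Delta_plus" using fD x by (simp add: DPmap_def)
  show "pconv G T f (pdelta G D \<one>) x = f x"
  proof (rule antisym)
    show "pconv G T f (pdelta G D \<one>) x \<le> f x"
    proof (rule pconv_least[OF x])
      fix y z assume y: "y \<in> carrier G" and z: "z \<in> carrier G" and yz: "y \<otimes> z = x"
      have "D z \<one> = D x y" using invl[OF z one_closed y] yz y by simp
      moreover have "f y \<in> Delta_plus" using fD y by (simp add: DPmap_def)
      ultimately show "T (f y) (pdelta G D \<one> z) \<le> f x" using Lip_ineq[OF f x y] z T_comm D_in[OF x y]
        by (simp add: pdelta_val)
    qed
  next
    have "f x = T (f x) (pdelta G D \<one> \<one>)" using D_H0[of \<one> \<one>] T_H0 fx by (simp add: pdelta_val)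
    also have "\<dots> \<le> pconv G T f (pdelta G D \<one>) (x \<otimes> \<one>)" using pconv_upper[OF fD eD x one_closed] .
    finally show "f x \<le> pconv G T f (pdelta G D \<one>) x" using x by simp
  qed
qed

lemma pdelta_mult:
  assumes a: "a \<in> carrier G" and b: "b \<in> carrier G"
  shows "pdelta G D (a \<otimes> b) = pconv G T (pdelta G D a) (pdelta G D b)"
proof (rule extensionalityI[OF pdelta_ext pconv_ext])
  have aD: "DPmap (pdelta G D a)" and bD: "DPmap (pdelta G D b)" using pdelta_DP a b by auto
  fix x assume x: "x \<in> carrier G"
  show "pdelta G D (a \<otimes> b) x = pconv G T (pdelta G D a) (pdelta G D b) x"
  proof (rule antisym)
    show "pconv G T (pdelta G D a) (pdelta G D b) x \<le> pdelta G D (a \<otimes> b) x"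
    proof (rule pconv_least[OF x])
      fix y z assume y: "y \<in> carrier G" and z: "z \<in> carrier G" and yz: "y \<otimes> z = x"
      have e1: "D y a = D x (a \<otimes> z)" using invr[OF y a z] yz by simp
      have e2: "D z b = D (a \<otimes> z) (a \<otimes> b)" using invl[OF z b a] by simp
      show "T (pdelta G D a y) (pdelta G D b z) \<le> pdelta G D (a \<otimes> b) x"
        using D_tri[OF x _ _, of "a \<otimes> z" "a \<otimes> b"] a b z x y e1 e2 by (simp add: pdelta_val)
    qed
  next
    let ?y = "x \<otimes> inv b"
    have y: "?y \<in> carrier G" using x b by simp
    have yb: "?y \<otimes> b = x" using x b by (simp add: m_assoc)
    have "D ?y a = D x (a \<otimes> b)" using invr[OF y a b] yb by simp
    then have "pdelta G D (a \<otimes> b) x = T (pdelta G D a ?y) (pdelta G D b b)"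
      using D_H0[of b b] b x y T_H0 D_in[OF y a] by (simp add: pdelta_val)
    also have "\<dots> \<le> pconv G T (pdelta G D a) (pdelta G D b) (?y \<otimes> b)" using pconv_upper[OF aD bD y b] .
    finally show "pdelta G D (a \<otimes> b) x \<le> pconv G T (pdelta G D a) (pdelta G D b) x" using yb by simp
  qed
qed

lemma pdelta_inj: "inj_on (pdelta G D) (carrier G)"
proof (rule inj_onI)
  fix a b assume a: "a \<in> carrier G" and b: "b \<in> carrier G" and e: "pdelta G D a = pdelta G D b"
  have "D a a = D a b" using fun_cong[OF e, of a] a by (simp add: pdelta_val)
  then show "a = b" using D_H0 a b by metis
qed

lemma main:
  shows "(\<forall>f\<in>Lip1 G D T. \<forall>g\<in>Lip1 G D T. pconv G T f g \<in> Lip1 G D T)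
    \<and> monoid (Lip_monoid G D T)
    \<and> \<one>\<^bsub>Lip_monoid G D T\<^esub> = pdelta G D \<one>\<^bsub>G\<^esub>
    \<and> pdelta G D \<in> hom G (Lip_monoid G D T)
    \<and> inj_on (pdelta G D) (carrier G)"
proof (intro conjI ballI)
  show "pconv G T f g \<in> Lip1 G D T" if "f \<in> Lip1 G D T" "g \<in> Lip1 G D T" for f g
    using pconv_Lip that by blast
  show "monoid (Lip_monoid G D T)"
    by (rule monoidI) (auto simp: Lip_monoid_def pconv_Lip pdelta_Lip pconv_assoc Lip_DP l_one_Lip r_one_Lip)
  show "\<one>\<^bsub>Lip_monoid G D T\<^esub> = pdelta G D \<one>" by (simp add: Lip_monoid_def)
  show "pdelta G D \<in> hom G (Lip_monoid G D T)"
    by (rule homI) (auto simp: Lip_monoid_def pdelta_Lip pdelta_mult)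
  show "inj_on (pdelta G D) (carrier G)" by (rule pdelta_inj)
qed

end

theorem theorem1:
  fixes G :: "('a, 'b) monoid_scheme"
    and D :: "'a \<Rightarrow> 'a \<Rightarrow> distf"
    and T :: "distf \<Rightarrow> distf \<Rightarrow> distf"
  assumes "invariant_pm_group G D T"
    and "tf_sup_continuous T"
  shows "(\<forall>f\<in>Lip1 G D T. \<forall>g\<in>Lip1 G D T. pconv G T f g \<in> Lip1 G D T)
    \<and> monoid (Lip_monoid G D T)
    \<and> \<one>\<^bsub>Lip_monoid G D T\<^esub> = pdelta G D \<one>\<^bsub>G\<^esub>
    \<and> pdelta G D \<in> hom G (Lip_monoid G D T)
    \<and> inj_on (pdelta G D) (carrier G)"
proof -
  interpret ipg G D T
    by (rule ipg.intro) (use assms in \<open>auto simp: invariant_pm_group_def ipg_axioms_def\<close>)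
  show ?thesis by (rule main)
qed

end
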